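(* Let Assumptions (A1), (A2) and (A4) hold for Algorithm Min-max DS. For $\epsilon\in(0,1)$, let $k_\epsilon$ be the first iteration index such that $\mu_{k_\epsilon+1}\le\epsilon$. Then $$k_\epsilon\ \le\ \frac{2}{c\alpha_0^2}\big(f(x_0)-F^{\min}\big)+\frac{\Omega\,(L_{\max}+c)^2(\mathcal{C}_1+1)^2}{4\beta_1^2}\,\epsilon^{-2},$$ where $\Omega=\frac{\gamma^2}{1-\beta_2^2}\left(\gamma^{-2}\alpha_0^2+\frac2c(f(x_0)-F^{\min})\right)$.
   Context: $F=(f_1,\dots,f_m)$, $m\ge2$, $I=\{1,\dots,m\}$, $f(x):=\max_{i\in I}f_i(x)$. Algorithm Min-max DS: choose $x_0$ with $f_i(x_0)<\infty$, $\alpha_0>0$, $0<\beta_1\le\beta_2<1$, $\gamma\ge1$, a set $\mathcal{D}$ of positive spanning sets of unit vectors, and $c>0$. At iteration $k$: choose $D_k\in\mathcal{D}$; if some $d_k\in D_k$ satisfies $f(x_k+\alpha_kd_k)<f(x_k)-\frac c2\alpha_k^2$, the iteration is successful, $x_{k+1}=x_k+\alpha_kd_k$, $\alpha_{k+1}\in[\alpha_k,\gamma\alpha_k]$; otherwise unsuccessful, $x_{k+1}=x_k$, $\alpha_{k+1}\in[\beta_1\alpha_k,\beta_2\alpha_k]$. $\mu(x):=-\min_{\|d\|\le1}\max_{i\in I}\nabla f_i(x)^\top d$, $\mu_k:=\mu(x_k)$, $\mu_{D_k}:=-\min_{d\in D_k,\|d\|\le1}\max_{i\in I}\nabla f_i(x_k)^\top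 d$. Pareto dominance: $y\prec z$ iff $z-y\in\mathbb{R}^m_+\setminus\{0\}$. (A1): each $f_i$ is continuously differentiable with $L_i$-Lipschitz gradient; $L_{\max}=\max_iL_i$. (A2): each $f_i$ is bounded below by $f_i^{\min}$ and above by $f_i^{\max}$ on $\{x: F(x)$ is not dominated by $F(x_0)\}$; $F^{\min}=\min_if_i^{\min}$. (A4): there exists $\mathcal{C}_1>0$ with $|\mu_{D_k}-\mu_k|\le\mathcal{C}_1\mu_{D_k}$ for all $k\ge0$. *)

theory Defs
  imports "HOL-Analysis.Analysis"
begin

text \<open>Objectives are indexed by I = {1..m}; F i is f_i, G i is the gradient of f_i.\<close>

definition fmax_of :: "nat \<Rightarrow> (nat \<Rightarrow> 'a \<Rightarrow> real) \<Rightarrow> 'a \<Rightarrow> real" where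
  "fmax_of m F x = Max ((\<lambda>i. F i x) ` {1..m})"

definition pareto_less :: "nat \<Rightarrow> (nat \<Rightarrow> real) \<Rightarrow> (nat \<Rightarrow> real) \<Rightarrow> bool" where
  "pareto_less m y z \<longleftrightarrow> (\<forall>i\<in>{1..m}. y i \<le> z i) \<and> (\<exists>i\<in>{1..m}. y i \<noteq> z i)"

definition pos_spanning :: "'a::euclidean_space set \<Rightarrow> bool" where
  "pos_spanning D \<longleftrightarrow> finite D \<and>
     (\<forall>v. \<exists>l. (\<forall>d\<in>D. 0 \<le> l d) \<and> v = (\<Sum>d\<in>D. l d *\<^sub>R d))"

definition mu :: "nat \<Rightarrow> (nat \<Rightarrow> 'a::euclidean_space \<Rightarrow> 'a) \<Rightarrow> 'a \<Rightarrow> real" where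
  "mu m G x = - (INF d\<in>cball 0 1. Max ((\<lambda>i. G i x \<bullet> d) ` {1..m}))"

definition mu_D :: "nat \<Rightarrow> (nat \<Rightarrow> 'a::euclidean_space \<Rightarrow> 'a) \<Rightarrow> 'a set \<Rightarrow> 'a \<Rightarrow> real" where
  "mu_D m G D x = - (INF d\<in>{d\<in>D. norm d \<le> 1}. Max ((\<lambda>i. G i x \<bullet> d) ` {1..m}))"

definition minmax_DS ::
  "nat \<Rightarrow> (nat \<Rightarrow> 'a::euclidean_space \<Rightarrow> real) \<Rightarrow> real \<Rightarrow> real \<Rightarrow> real \<Rightarrow> real \<Rightarrow> 'a set set
    \<Rightarrow> (nat \<Rightarrow> 'a) \<Rightarrow> (nat \<Rightarrow> real) \<Rightarrow> (nat \<Rightarrow> 'a set) \<Rightarrow> bool" where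
  "minmax_DS m F \<beta>1 \<beta>2 \<gamma> c \<D> x \<alpha> D \<longleftrightarrow>
     0 < \<alpha> 0 \<and> 0 < \<beta>1 \<and> \<beta>1 \<le> \<beta>2 \<and> \<beta>2 < 1 \<and> 1 \<le> \<gamma> \<and> 0 < c \<and>
     (\<forall>P\<in>\<D>. pos_spanning P \<and> (\<forall>d\<in>P. norm d = 1)) \<and>
     (\<forall>k. D k \<in> \<D> \<and>
        (if \<exists>d\<in>D k. fmax_of m F (x k + \<alpha> k *\<^sub>R d) < fmax_of m F (x k) - c / 2 * \<alpha> k ^ 2
         then (\<exists>d\<in>D k. fmax_of m F (x k + \<alpha> k *\<^sub>R d) < fmax_of m F (x k) - c / 2 * \<alpha> k ^ 2
                        \<and> x (Suc k) = x k + \<alpha> k *\<^sub>R d)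
              \<and> \<alpha> k \<le> \<alpha> (Suc k) \<and> \<alpha> (Suc k) \<le> \<gamma> * \<alpha> k
         else x (Suc k) = x k \<and> \<beta>1 * \<alpha> k \<le> \<alpha> (Suc k) \<and> \<alpha> (Suc k) \<le> \<beta>2 * \<alpha> k))"

end

theory Submission
  imports Defs
begin

lemma descent:
  fixes f :: "'a::euclidean_space \<Rightarrow> real"
  assumes d: "\<forall>y. (f has_derivative (\<lambda>h. g y \<bullet> h)) (at y)"
  and lip: "\<forall>y z. norm (g y - g z) \<le> L * norm (y - z)"
  shows "f (y + h) \<le> f y + g y \<bullet> h + L/2 * norm h ^ 2"
proof -
  define \<phi> where "\<phi> t = f (y + t *\<^sub>R h) - t * (g y \<bullet> h) - L/2 * t^2 * norm h^2" for t
  have "\<phi> 1 \<le> \<phi> 0"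
  proof (rule DERIV_nonpos_imp_nonincreasing[of 0 1 \<phi>])
    fix t :: real assume t: "0 \<le> t" "t \<le> 1"
    have d1: "((\<lambda>t. f (y + t *\<^sub>R h)) has_real_derivative (g (y + t *\<^sub>R h) \<bullet> h)) (at t)"
    proof -
      have "((\<lambda>t. y + t *\<^sub>R h) has_derivative (\<lambda>s. s *\<^sub>R h)) (at t)"
        by (auto intro!: derivative_eq_intros)
      from has_derivative_compose[OF this d[rule_format, of "y + t *\<^sub>R h"]]
      have "((\<lambda>t. f (y + t *\<^sub>R h)) has_derivative (\<lambda>s. g (y + t *\<^sub>R h) \<bullet> (s *\<^sub>R h))) (at t)" .
      moreover have "(\<lambda>s. g (y + t *\<^sub>R h) \<bullet> (s *\<^sub>R h)) = (*) (g (y + t *\<^sub>R h) \<bullet> h)"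
        by (auto simp: mult.commute)
      ultimately show ?thesis by (simp add: has_field_derivative_def)
    qed
    have "(\<phi> has_real_derivative (g (y + t *\<^sub>R h) \<bullet> h - g y \<bullet> h - L * t * norm h^2)) (at t)"
      unfolding \<phi>_def
      by (rule derivative_eq_intros d1 refl | simp)+
    moreover have "g (y + t *\<^sub>R h) \<bullet> h - g y \<bullet> h - L * t * norm h^2 \<le> 0"
    proof -
      have "g (y + t *\<^sub>R h) \<bullet> h - g y \<bullet> h = (g (y + t *\<^sub>R h) - g y) \<bullet> h"
        by (simp add: inner_diff_left)
      also have "\<dots> \<le> norm (g (y + t *\<^sub>R h) - g y) * norm h" by (rule norm_cauchy_schwarz)
      also have "\<dots> \<le> (L * norm (t *\<^sub>R h)) * norm h"
        using lip[rule_format, of "y + t *\<^sub>R h" y] by (intro mult_right_mono) auto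
      also have "\<dots> = L * t * norm h^2" using t by (simp add: power2_eq_square)
      finally show ?thesis by simp
    qed
    ultimately show "\<exists>y. (\<phi> has_real_derivative y) (at t) \<and> y \<le> 0" by blast
  qed simp
  then show ?thesis unfolding \<phi>_def by simp
qed

theorem theorem3:
  fixes F :: "nat \<Rightarrow> 'a::euclidean_space \<Rightarrow> real" and G :: "nat \<Rightarrow> 'a \<Rightarrow> 'a"
    and m :: nat and L fmin fmax :: "nat \<Rightarrow> real"
    and C1 \<beta>1 \<beta>2 \<gamma> c \<epsilon> :: real and \<D> :: "'a set set"
    and x :: "nat \<Rightarrow> 'a" and \<alpha> :: "nat \<Rightarrow> real" and D :: "nat \<Rightarrow> 'a set" and k\<epsilon> :: nat
  assumes m2: "m \<ge> 2"
    and alg: "minmax_DS m F \<beta>1 \<beta>2 \<gamma> c \<D> x \<alpha> D"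
    and A1_grad: "\<forall>i\<in>{1..m}. \<forall>y. (F i has_derivative (\<lambda>h. G i y \<bullet> h)) (at y)"
    and A1_lip: "\<forall>i\<in>{1..m}. \<forall>y z. norm (G i y - G i z) \<le> L i * norm (y - z)"
    and A2: "\<forall>i\<in>{1..m}. \<forall>y. \<not> pareto_less m (\<lambda>j. F j (x 0)) (\<lambda>j. F j y)
                 \<longrightarrow> fmin i \<le> F i y \<and> F i y \<le> fmax i"
    and A4_pos: "C1 > 0"
    and A4: "\<forall>k. \<bar>mu_D m G (D k) (x k) - mu m G (x k)\<bar> \<le> C1 * mu_D m G (D k) (x k)"
    and eps: "0 < \<epsilon>" "\<epsilon> < 1"
    and first1: "mu m G (x (Suc k\<epsilon>)) \<le> \<epsilon>"
    and first2: "\<forall>j<k\<epsilon>. \<epsilon> < mu m G (x (Suc j))"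
  shows "real k\<epsilon> \<le> 2 / (c * \<alpha> 0 ^ 2) * (fmax_of m F (x 0) - Min (fmin ` {1..m}))
          + (\<gamma>^2 / (1 - \<beta>2^2) * (\<alpha> 0 ^ 2 / \<gamma>^2 + 2 / c * (fmax_of m F (x 0) - Min (fmin ` {1..m}))))
            * (Max (L ` {1..m}) + c)^2 * (C1 + 1)^2 / (4 * \<beta>1^2) * \<epsilon> powr (-2)"
proof -
  define fx where "fx k = fmax_of m F (x k)" for k
  define succ where "succ k \<longleftrightarrow> (\<exists>d\<in>D k. fmax_of m F (x k + \<alpha> k *\<^sub>R d) < fmax_of m F (x k) - c / 2 * \<alpha> k ^ 2)" for k
  define \<sigma> where "\<sigma> k = (if succ k then 1 else 0::real)" for k
  define Fmin where "Fmin = Min (fmin ` {1..m})"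
  define Lm where "Lm = Max (L ` {1..m})"
  have I: "finite {1..m}" "{1..m} \<noteq> {}" "1 \<in> {1..m}" using m2 by auto
  have par: "0 < \<alpha> 0" "0 < \<beta>1" "\<beta>1 \<le> \<beta>2" "\<beta>2 < 1" "1 \<le> \<gamma>" "0 < c"
    and DD: "\<forall>P\<in>\<D>. pos_spanning P \<and> (\<forall>d\<in>P. norm d = 1)"
    using alg unfolding minmax_DS_def by auto
  have step: "D k \<in> \<D> \<and> (if succ k
         then (\<exists>d\<in>D k. fmax_of m F (x k + \<alpha> k *\<^sub>R d) < fmax_of m F (x k) - c / 2 * \<alpha> k ^ 2
                        \<and> x (Suc k) = x k + \<alpha> k *\<^sub>R d)
              \<and> \<alpha> k \<le> \<alpha> (Suc k) \<and> \<alpha> (Suc k) \<le> \<gamma> * \<alpha> k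
         else x (Suc k) = x k \<and> \<beta>1 * \<alpha> k \<le> \<alpha> (Suc k) \<and> \<alpha> (Suc k) \<le> \<beta>2 * \<alpha> k)" for k
    using alg unfolding minmax_DS_def succ_def by blast
  have sS: "fx (Suc k) < fx k - c / 2 * \<alpha> k ^ 2 \<and> \<alpha> k \<le> \<alpha> (Suc k) \<and> \<alpha> (Suc k) \<le> \<gamma> * \<alpha> k"
    if "succ k" for k using step[of k] that unfolding fx_def by auto
  have sU: "x (Suc k) = x k \<and> \<beta>1 * \<alpha> k \<le> \<alpha> (Suc k) \<and> \<alpha> (Suc k) \<le> \<beta>2 * \<alpha> k"
    if "\<not> succ k" for k using step[of k] that by auto
  have apos: "0 < \<alpha> k" for k
  proof (induction k)
    case 0 then show ?case using par by simp
  next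
    case (Suc k) then show ?case
      using sS[of k] sU[of k] par by (cases "succ k") (auto intro: mult_pos_pos order.strict_trans2)
  qed
  obtain b :: 'a where b: "b \<in> Basis" using nonempty_Basis by blast
  have Lnn: "0 \<le> L i" if "i \<in> {1..m}" for i
  proof -
    have "norm (G i b - G i 0) \<le> L i * norm (b - 0)" using A1_lip that by blast
    then show ?thesis using b by (simp add: norm_Basis) (meson norm_ge_zero order_trans)
  qed
  have LLm: "L i \<le> Lm" if "i \<in> {1..m}" for i unfolding Lm_def using I that by auto
  have Lm0: "0 \<le> Lm" using LLm[of 1] Lnn[of 1] I by auto
  have fdec: "fx N \<le> fx 0 - c / 2 * (\<Sum>k<N. \<sigma> k * \<alpha> k ^ 2)" for N
  proof (induction N)
    case 0 then show ?case by simp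
  next
    case (Suc N) then show ?case
      using sS[of N] sU[of N] unfolding \<sigma>_def fx_def
      by (cases "succ N") (auto simp: algebra_simps)
  qed
  have xor: "x N = x 0 \<or> fx N < fx 0" for N
  proof (induction N)
    case 0 then show ?case by simp
  next
    case (Suc N)
    have "0 < c / 2 * \<alpha> N ^ 2" using par apos[of N] by simp
    then show ?case
      using Suc sS[of N] sU[of N] unfolding fx_def
      by (cases "succ N") auto
  qed
  have fbound: "Fmin \<le> fx N" for N
  proof -
    have nd: "\<not> pareto_less m (\<lambda>j. F j (x 0)) (\<lambda>j. F j (x N))"
    proof
      assume p: "pareto_less m (\<lambda>j. F j (x 0)) (\<lambda>j. F j (x N))"
      show False
      proof (cases "x N = x 0")
        case True then show ?thesis using p unfolding pareto_less_def by auto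
      next
        case False
        then have lt: "fx N < fx 0" using xor by blast
        have "fx 0 \<le> fx N" unfolding fx_def fmax_of_def
        proof (rule Max.boundedI)
          show "finite ((\<lambda>i. F i (x 0)) ` {1..m})" by simp
          show "(\<lambda>i. F i (x 0)) ` {1..m} \<noteq> {}" using I by simp
          fix a assume "a \<in> (\<lambda>i. F i (x 0)) ` {1..m}"
          then obtain i where i: "i \<in> {1..m}" "a = F i (x 0)" by auto
          have "F i (x 0) \<le> F i (x N)" using p i unfolding pareto_less_def by auto
          also have "\<dots> \<le> Max ((\<lambda>i. F i (x N)) ` {1..m})" using i by (intro Max_ge) auto
          finally show "a \<le> Max ((\<lambda>i. F i (x N)) ` {1..m})" using i by simp
        qed
        then show False using lt by simp
      qed
    qed
    have "Fmin \<le> fmin 1" unfolding Fmin_def using I by (intro Min_le) auto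
    also have "\<dots> \<le> F 1 (x N)" using A2 nd I by blast
    also have "\<dots> \<le> fx N" unfolding fx_def fmax_of_def using I by (intro Max_ge) auto
    finally show ?thesis .
  qed
  define R where "R = fx 0 - Fmin"
  define S where "S = (\<Sum>k<k\<epsilon>. \<sigma> k * \<alpha> k ^ 2)"
  have Sb: "S \<le> 2 / c * R"
  proof -
    have "c / 2 * S \<le> R" using fdec[of k\<epsilon>] fbound[of k\<epsilon>] unfolding S_def R_def by simp
    then show ?thesis using par by (simp add: field_simps)
  qed
  have R0: "0 \<le> R" using fbound[of 0] unfolding R_def by simp
  have unsucc: "mu m G (x k) \<le> (1 + C1) * (Lm + c) * \<alpha> k / 2" if ns: "\<not> succ k" for k
  proof -
    let ?M = "\<lambda>d. Max ((\<lambda>i. G i (x k) \<bullet> d) ` {1..m})"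
    have Dk: "pos_spanning (D k)" "\<forall>d\<in>D k. norm d = 1" using step[of k] DD by auto
    have ne: "D k \<noteq> {}"
    proof
      assume "D k = {}"
      then have "b = 0" using Dk(1) unfolding pos_spanning_def by auto
      then show False using b by auto
    qed
    have Mb: "- ((Lm + c) * \<alpha> k / 2) \<le> ?M d" if d: "d \<in> D k" for d
    proof -
      have nd: "norm d = 1" using Dk d by auto
      have ge: "fx k - c / 2 * \<alpha> k ^ 2 \<le> fmax_of m F (x k + \<alpha> k *\<^sub>R d)"
        using ns d unfolding succ_def fx_def by (auto simp: not_less)
      obtain j where j: "j \<in> {1..m}" "fmax_of m F (x k + \<alpha> k *\<^sub>R d) = F j (x k + \<alpha> k *\<^sub>R d)"
      proof -
        have "Max ((\<lambda>i. F i (x k + \<alpha> k *\<^sub>R d)) ` {1..m}) \<in> (\<lambda>i. F i (x k + \<alpha> k *\<^sub>R d)) ` {1..m}"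
          using I by (intro Max_in) auto
        then show ?thesis using that unfolding fmax_of_def by auto
      qed
      have fj: "F j (x k) \<le> fx k" unfolding fx_def fmax_of_def using I j by (intro Max_ge) auto
      have desc: "F j (x k + \<alpha> k *\<^sub>R d) \<le> F j (x k) + G j (x k) \<bullet> (\<alpha> k *\<^sub>R d) + L j / 2 * norm (\<alpha> k *\<^sub>R d) ^ 2"
        using A1_grad A1_lip j(1) by (intro descent) auto
      have "norm (\<alpha> k *\<^sub>R d) = \<alpha> k" using nd apos[of k] by simp
      then have "- c / 2 * \<alpha> k ^ 2 \<le> \<alpha> k * (G j (x k) \<bullet> d) + L j / 2 * \<alpha> k ^ 2"
        using ge j(2) fj desc by simp
      then have "- c / 2 * \<alpha> k ^ 2 \<le> \<alpha> k * (G j (x k) \<bullet> d) + Lm / 2 * \<alpha> k ^ 2"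
        using LLm[OF j(1)] by (smt (verit) divide_right_mono mult_right_mono zero_le_power2)
      then have "- ((Lm + c) * \<alpha> k / 2) * \<alpha> k \<le> (G j (x k) \<bullet> d) * \<alpha> k"
        by (simp add: power2_eq_square algebra_simps divide_simps)
      then have "- ((Lm + c) * \<alpha> k / 2) \<le> G j (x k) \<bullet> d"
        using apos[of k] by (metis mult_le_cancel_right_pos)
      also have "\<dots> \<le> ?M d" using I j by (intro Max_ge) auto
      finally show ?thesis .
    qed
    have setq: "{d \<in> D k. norm d \<le> 1} = D k" using Dk by auto
    have "- ((Lm + c) * \<alpha> k / 2) \<le> (INF d\<in>{d \<in> D k. norm d \<le> 1}. ?M d)"
      unfolding setq using ne Mb by (intro cINF_greatest) auto
    then have muD: "mu_D m G (D k) (x k) \<le> (Lm + c) * \<alpha> k / 2" unfolding mu_D_def by simp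
    have "mu m G (x k) - mu_D m G (D k) (x k) \<le> C1 * mu_D m G (D k) (x k)"
      using A4[rule_format, of k] by simp
    then have "mu m G (x k) \<le> (1 + C1) * mu_D m G (D k) (x k)" by (simp add: algebra_simps)
    also have "\<dots> \<le> (1 + C1) * ((Lm + c) * \<alpha> k / 2)" using muD A4_pos by (intro mult_left_mono) auto
    finally show ?thesis by simp
  qed
  define thr where "thr = 2 * \<epsilon> / ((1 + C1) * (Lm + c))"
  define \<theta> where "\<theta> = \<beta>1 * thr"
  have Lc: "0 < Lm + c" using Lm0 par by simp
  have thr0: "0 < thr" unfolding thr_def using eps A4_pos Lc by simp
  have th0: "0 < \<theta>" unfolding \<theta>_def using thr0 par by simp
  have thth: "\<theta> \<le> thr" unfolding \<theta>_def using thr0 par by simp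
  have ubig: "thr < \<alpha> k" if "k < k\<epsilon>" "\<not> succ k" for k
  proof -
    have "\<epsilon> < mu m G (x (Suc k))" using first2 that by blast
    also have "\<dots> = mu m G (x k)" using sU[OF that(2)] by simp
    also have "\<dots> \<le> (1 + C1) * (Lm + c) * \<alpha> k / 2" using unsucc[OF that(2)] .
    finally have "2 * \<epsilon> < ((1 + C1) * (Lm + c)) * \<alpha> k" by simp
    moreover have "0 < (1 + C1) * (Lm + c)" using A4_pos Lc by simp
    ultimately show ?thesis unfolding thr_def by (simp add: pos_divide_less_eq mult.commute)
  qed
  have inv: "k \<le> k\<epsilon> \<Longrightarrow> min (\<alpha> 0) \<theta> \<le> \<alpha> k" for k
  proof (induction k)
    case 0 then show ?case by simp
  next
    case (Suc k)
    then have k: "k < k\<epsilon>" "min (\<alpha> 0) \<theta> \<le> \<alpha> k" by auto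
    show ?case
    proof (cases "succ k")
      case True then show ?thesis using sS[OF True] k by auto
    next
      case False
      have "\<theta> \<le> \<beta>1 * \<alpha> k" unfolding \<theta>_def using ubig[OF k(1) False] par by simp
      then show ?thesis using sU[OF False] by auto
    qed
  qed
  define T where "T = (\<Sum>k<k\<epsilon>. \<alpha> k ^ 2)"
  have Tb: "(1 - \<beta>2^2) * T \<le> \<alpha> 0 ^ 2 + \<gamma>^2 * S"
  proof -
    have pt: "\<alpha> (Suc k) ^ 2 \<le> \<beta>2^2 * \<alpha> k ^ 2 + \<gamma>^2 * (\<sigma> k * \<alpha> k ^ 2)" for k
    proof (cases "succ k")
      case True
      have "\<alpha> (Suc k) ^ 2 \<le> (\<gamma> * \<alpha> k) ^ 2" using sS[OF True] apos[of k]
        by (intro power_mono) auto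
      moreover have "0 \<le> \<beta>2^2 * \<alpha> k ^ 2" by simp
      ultimately show ?thesis using True unfolding \<sigma>_def power_mult_distrib
        by (simp add: add_increasing)
    next
      case False
      have "\<alpha> (Suc k) ^ 2 \<le> (\<beta>2 * \<alpha> k) ^ 2" using sU[OF False] apos[of k] apos[of "Suc k"]
        by (intro power_mono) auto
      then show ?thesis using False unfolding \<sigma>_def by (simp add: power_mult_distrib)
    qed
    have "T \<le> (\<Sum>k<Suc k\<epsilon>. \<alpha> k ^ 2)" unfolding T_def by simp
    also have "\<dots> = \<alpha> 0 ^ 2 + (\<Sum>k<k\<epsilon>. \<alpha> (Suc k) ^ 2)" by (subst sum.lessThan_Suc_shift) simp
    also have "\<dots> \<le> \<alpha> 0 ^ 2 + (\<Sum>k<k\<epsilon>. \<beta>2^2 * \<alpha> k ^ 2 + \<gamma>^2 * (\<sigma> k * \<alpha> k ^ 2))"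
      by (intro add_left_mono sum_mono pt)
    also have "\<dots> = \<alpha> 0 ^ 2 + \<beta>2^2 * T + \<gamma>^2 * S"
      unfolding T_def S_def by (simp add: sum.distrib sum_distrib_left)
    finally show ?thesis by (simp add: algebra_simps)
  qed
  define \<Omega> where "\<Omega> = \<gamma>^2 / (1 - \<beta>2^2) * (\<alpha> 0 ^ 2 / \<gamma>^2 + 2 / c * R)"
  have b2: "0 < 1 - \<beta>2^2" using par by (simp add: power_less_one_iff abs_square_less_1)
  have TO: "T \<le> \<Omega>"
  proof -
    have "(1 - \<beta>2^2) * T \<le> \<alpha> 0 ^ 2 + \<gamma>^2 * (2 / c * R)"
      using Tb Sb par by (smt (verit) mult_left_mono zero_le_power2)
    also have "\<dots> = \<gamma>^2 * (\<alpha> 0 ^ 2 / \<gamma>^2 + 2 / c * R)" using par by (simp add: field_simps)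
    finally show ?thesis unfolding \<Omega>_def using b2 by (simp add: field_simps)
  qed
  define A where "A = {k. k < k\<epsilon> \<and> \<theta> \<le> \<alpha> k}"
  define B where "B = {k. k < k\<epsilon> \<and> \<alpha> k < \<theta>}"
  have AB: "{..<k\<epsilon>} = A \<union> B" "A \<inter> B = {}" "finite A" "finite B" unfolding A_def B_def by auto
  have cnt: "k\<epsilon> = card A + card B" using AB card_Un_disjoint[of A B] by (metis card_lessThan)
  have cA: "real (card A) * \<theta>^2 \<le> T"
  proof -
    have "real (card A) * \<theta>^2 = (\<Sum>k\<in>A. \<theta>^2)" by simp
    also have "\<dots> \<le> (\<Sum>k\<in>A. \<alpha> k ^ 2)" using th0 unfolding A_def by (intro sum_mono power_mono) auto
    also have "\<dots> \<le> T" unfolding T_def using AB by (intro sum_mono2) auto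
    finally show ?thesis .
  qed
  have cB: "real (card B) * \<alpha> 0 ^ 2 \<le> S"
  proof -
    have "real (card B) * \<alpha> 0 ^2 = (\<Sum>k\<in>B. \<alpha> 0 ^2)" by simp
    also have "\<dots> \<le> (\<Sum>k\<in>B. \<sigma> k * \<alpha> k ^ 2)"
    proof (intro sum_mono)
      fix k assume k: "k \<in> B"
      have sk: "succ k" using ubig[of k] k thth unfolding B_def by force
      have "\<alpha> 0 \<le> \<alpha> k" using inv[of k] k unfolding B_def by auto
      then show "\<alpha> 0 ^ 2 \<le> \<sigma> k * \<alpha> k ^ 2" using sk par unfolding \<sigma>_def by (simp add: power_mono)
    qed
    also have "\<dots> \<le> S" unfolding S_def \<sigma>_def using AB by (intro sum_mono2) auto
    finally show ?thesis .
  qed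
  have "real k\<epsilon> \<le> \<Omega> / \<theta>^2 + 2 / c * R / \<alpha> 0 ^ 2"
  proof -
    have "real (card A) \<le> \<Omega> / \<theta>^2" using cA TO th0 by (simp add: field_simps)
    moreover have "real (card B) \<le> 2 / c * R / \<alpha> 0 ^ 2"
    proof -
      have "real (card B) * \<alpha> 0 ^ 2 \<le> 2 / c * R" using cB Sb by linarith
      then show ?thesis using par by (simp add: pos_le_divide_eq mult_ac)
    qed
    ultimately show ?thesis using cnt by simp
  qed
  also have "\<dots> = 2 / (c * \<alpha> 0 ^ 2) * R + \<Omega> * (Lm + c)^2 * (C1 + 1)^2 / (4 * \<beta>1^2) * \<epsilon> powr (-2)"
    unfolding \<theta>_def thr_def using eps par A4_pos Lc
    by (simp add: powr_minus field_simps power2_eq_square)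
  finally show ?thesis unfolding R_def \<Omega>_def Fmin_def Lm_def fx_def .
qed

end
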